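(* Consider the gGASP instance with players $N=\{1,2,3\}$, non-void activities $A^*=\{a,b,c\}$, links $L=\{\{1,2\},\{2,3\}\}$ (a path), and preferences (listing only approved alternatives and $(a_\emptyset,1)$; all unlisted alternatives are ranked strictly below $(a_\emptyset,1)$): player 1: $(b,2)\succ(a,1)\succ(c,3)\succ(c,2)\succ(c,1)\succ(a_\emptyset,1)$; player 2: $(c,3)\succ(c,2)\succ(a,2)\succ(b,2)\succ(b,1)\succ(a_\emptyset,1)$; player 3: $(c,3)\succ(a,2)\succ(a,1)\succ(a_\emptyset,1)$. Then this instance admits no individually stable feasible assignment.
   Context: In a gGASP instance with players $N=[n]$, activities $A=A^*\cup\{a_\emptyset\}$ ($a_\emptyset$ the void activity), preferences $\succeq_i$ over $X=(A^*\times[n])\cup\{(a_\emptyset,1)\}$ and links $L$: a feasible assignment is a map $\pi:N\to A$ such that each $\pi^a=\{i:\pi(i)=a\}$, $a\in A^*$, is connected in $(N,L)$ (empty allowed). $\pi_i=\pi^{\pi(i)}$ if $\pi(i)\neq a_\emptyset$, else $\pi_i=\{i\}$. $\pi$ is individually rational if $(\pi(i),|\pi_i|)\succeq_i(a_\emptyset,1)$ for all $i$. Player $i$ has an NS-deviation to $a\in A^*\setminus\{\pi(i)\}$ if $\pi^a\cup\{i\}$ is connected and $(a,|\pi^a|+1)\succ_i(\pi(i),|\pi_i|)$; it is an IS-deviation if moreover $(a,|\pi^a|+1)\succeq_j(a,|\pi^a|)$ for all $j\in\pi^a$. $\pi$ is individually stable if it is individually rational and no player has an IS-deviation. *)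

theory Defs
  imports Main
begin

text \<open>Players of type 'p, non-void activities of type 'a;
 an activity is 'a option, None being the void activity. Preferences are given as
 a weak preference relation pref i x y meaning x is weakly preferred to y by i,
 on alternatives (activity, size). Links L are unordered pairs (2-element sets).\<close>

definition connected_in :: "'p set set \<Rightarrow> 'p set \<Rightarrow> bool" where
  "connected_in L S \<longleftrightarrow>
     (\<forall>x\<in>S. \<forall>y\<in>S. (x, y) \<in> ({(u, v). u \<in> S \<and> v \<in> S \<and> {u, v} \<in> L})\<^sup>*)"

definition coalition :: "'p set \<Rightarrow> ('p \<Rightarrow> 'a option) \<Rightarrow> 'a \<Rightarrow> 'p set" where
  "coalition N \<pi> a = {i \<in> N. \<pi> i = Some a}"

definition feasible ::
  "'p set \<Rightarrow> 'a set \<Rightarrow> 'p set set \<Rightarrow> ('p \<Rightarrow> 'a option) \<Rightarrow> bool" where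
  "feasible N Astar L \<pi> \<longleftrightarrow>
     (\<forall>i\<in>N. \<pi> i = None \<or> (\<exists>a\<in>Astar. \<pi> i = Some a)) \<and>
     (\<forall>a\<in>Astar. connected_in L (coalition N \<pi> a))"

definition own_size :: "'p set \<Rightarrow> ('p \<Rightarrow> 'a option) \<Rightarrow> 'p \<Rightarrow> nat" where
  "own_size N \<pi> i = (case \<pi> i of None \<Rightarrow> 1 | Some a \<Rightarrow> card (coalition N \<pi> a))"

definition strict_pref ::
  "('p \<Rightarrow> ('a option \<times> nat) \<Rightarrow> ('a option \<times> nat) \<Rightarrow> bool) \<Rightarrow> 'p \<Rightarrow> ('a option \<times> nat) \<Rightarrow> ('a option \<times> nat) \<Rightarrow> bool" where
  "strict_pref pref i x y \<longleftrightarrow> pref i x y \<and> \<not> pref i y x"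

definition individually_rational ::
  "'p set \<Rightarrow> ('p \<Rightarrow> ('a option \<times> nat) \<Rightarrow> ('a option \<times> nat) \<Rightarrow> bool) \<Rightarrow> ('p \<Rightarrow> 'a option) \<Rightarrow> bool" where
  "individually_rational N pref \<pi> \<longleftrightarrow>
     (\<forall>i\<in>N. pref i (\<pi> i, own_size N \<pi> i) (None, 1))"

definition NS_deviation ::
  "'p set \<Rightarrow> 'a set \<Rightarrow> 'p set set \<Rightarrow> ('p \<Rightarrow> ('a option \<times> nat) \<Rightarrow> ('a option \<times> nat) \<Rightarrow> bool)
   \<Rightarrow> ('p \<Rightarrow> 'a option) \<Rightarrow> 'p \<Rightarrow> 'a \<Rightarrow> bool" where
  "NS_deviation N Astar L pref \<pi> i a \<longleftrightarrow>
     a \<in> Astar \<and> \<pi> i \<noteq> Some a \<and>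
     connected_in L (coalition N \<pi> a \<union> {i}) \<and>
     strict_pref pref i (Some a, card (coalition N \<pi> a) + 1) (\<pi> i, own_size N \<pi> i)"

definition IS_deviation ::
  "'p set \<Rightarrow> 'a set \<Rightarrow> 'p set set \<Rightarrow> ('p \<Rightarrow> ('a option \<times> nat) \<Rightarrow> ('a option \<times> nat) \<Rightarrow> bool)
   \<Rightarrow> ('p \<Rightarrow> 'a option) \<Rightarrow> 'p \<Rightarrow> 'a \<Rightarrow> bool" where
  "IS_deviation N Astar L pref \<pi> i a \<longleftrightarrow>
     NS_deviation N Astar L pref \<pi> i a \<and>
     (\<forall>j\<in>coalition N \<pi> a.
        pref j (Some a, card (coalition N \<pi> a) + 1) (Some a, card (coalition N \<pi> a)))"

definition individually_stable ::
  "'p set \<Rightarrow> 'a set \<Rightarrow> 'p set set \<Rightarrow> ('p \<Rightarrow> ('a option \<times> nat) \<Rightarrow> ('a option \<times> nat) \<Rightarrow> bool)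
   \<Rightarrow> ('p \<Rightarrow> 'a option) \<Rightarrow> bool" where
  "individually_stable N Astar L pref \<pi> \<longleftrightarrow>
     individually_rational N pref \<pi> \<and>
     (\<forall>i\<in>N. \<forall>a\<in>Astar. \<not> IS_deviation N Astar L pref \<pi> i a)"

datatype act = Act_a | Act_b | Act_c

text \<open>Ranks: higher is better; (void,1) has rank 1, unapproved alternatives rank 0
 (they are all below the void alternative, mutually indifferent).\<close>

definition ex_rank :: "nat \<Rightarrow> (act option \<times> nat) \<Rightarrow> nat" where
  "ex_rank i x =
    (if x = (None, 1) then 1
     else if i = 1 then
       (if x = (Some Act_b, 2) then 7 else if x = (Some Act_a, 1) then 6
        else if x = (Some Act_c, 3) then 5 else if x = (Some Act_c, 2) then 4
        else if x = (Some Act_c, 1) then 3 else 0)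
     else if i = 2 then
       (if x = (Some Act_c, 3) then 7 else if x = (Some Act_c, 2) then 6
        else if x = (Some Act_a, 2) then 5 else if x = (Some Act_b, 2) then 4
        else if x = (Some Act_b, 1) then 3 else 0)
     else if i = 3 then
       (if x = (Some Act_c, 3) then 7 else if x = (Some Act_a, 2) then 6
        else if x = (Some Act_a, 1) then 5 else 0)
     else 0)"

definition ex_pref :: "nat \<Rightarrow> (act option \<times> nat) \<Rightarrow> (act option \<times> nat) \<Rightarrow> bool" where
  "ex_pref i x y \<longleftrightarrow> ex_rank i x \<ge> ex_rank i y"

definition ex_N :: "nat set" where "ex_N = {1, 2, 3}"
definition ex_A :: "act set" where "ex_A = {Act_a, Act_b, Act_c}"
definition ex_L :: "nat set set" where "ex_L = {{1, 2}, {2, 3}}"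

end

theory Submission
  imports Defs
begin

lemma edge_iff: "({u,v} \<in> ex_L) = ((u=1\<and>v=2)\<or>(u=2\<and>v=1)\<or>(u=2\<and>v=3)\<or>(u=3\<and>v=2))"
  unfolding ex_L_def by (auto simp: doubleton_eq_iff)

lemma conn_13: "\<not> connected_in ex_L {1::nat,3}"
proof
  assume "connected_in ex_L {1::nat,3}"
  hence "(1::nat,3) \<in> ({(u, v). u \<in> {1::nat,3} \<and> v \<in> {1,3} \<and> {u, v} \<in> ex_L})\<^sup>*"
    unfolding connected_in_def by blast
  moreover have "{(u, v). u \<in> {1::nat,3} \<and> v \<in> {1,3} \<and> {u, v} \<in> ex_L} = {}"
    by (auto simp: edge_iff)
  ultimately have "(1::nat,3) \<in> ({}::(nat\<times>nat) set)\<^sup>*" by metis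
  thus False by simp
qed

lemma conn_123: "connected_in ex_L {1::nat,2,3}"
proof -
  let ?R = "{(u, v). u \<in> {1::nat,2,3} \<and> v \<in> {1,2,3} \<and> {u, v} \<in> ex_L}"
  have e: "(1,2)\<in>?R" "(2,1)\<in>?R" "(2,3)\<in>?R" "(3,2)\<in>?R" by (auto simp: edge_iff)
  have "(1,3)\<in>?R\<^sup>*" "(3,1)\<in>?R\<^sup>*" using e
    by (meson converse_rtrancl_into_rtrancl r_into_rtrancl)+
  then show ?thesis unfolding connected_in_def using e by auto
qed

lemma conn_12: "connected_in ex_L {1::nat,2}"
proof -
  let ?R = "{(u, v). u \<in> {1::nat,2} \<and> v \<in> {1,2} \<and> {u, v} \<in> ex_L}"
  have e: "(1,2)\<in>?R" "(2,1)\<in>?R" by (auto simp: edge_iff)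
  then show ?thesis unfolding connected_in_def by auto
qed

lemma conn_23: "connected_in ex_L {2::nat,3}"
proof -
  let ?R = "{(u, v). u \<in> {2::nat,3} \<and> v \<in> {2,3} \<and> {u, v} \<in> ex_L}"
  have e: "(2,3)\<in>?R" "(3,2)\<in>?R" by (auto simp: edge_iff)
  then show ?thesis unfolding connected_in_def by auto
qed

lemma conn_1: "connected_in ex_L {x}" "connected_in ex_L {}"
  unfolding connected_in_def by auto

lemma conn_char: assumes "S \<subseteq> {1::nat,2,3}"
  shows "connected_in ex_L S = (1\<in>S \<and> 3\<in>S \<longrightarrow> 2\<in>S)"
proof -
  have "S \<in> Pow {1::nat,2,3}" using assms by simp
  moreover have "Pow {1::nat,2,3} = {{},{1},{2},{3},{1,2},{1,3},{2,3},{1,2,3}}"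
    by (auto simp: Pow_insert)
  ultimately have "S = {} \<or> S = {1} \<or> S = {2} \<or> S = {3} \<or> S = {1,2} \<or> S = {1,3} \<or> S = {2,3} \<or> S = {1,2,3}"
    by blast
  then show ?thesis
    using conn_13 conn_123 conn_12 conn_23 conn_1 by (elim disjE) simp_all
qed

lemma coal_sub: "coalition ex_N \<pi> a \<subseteq> {1,2,3}" "coalition ex_N \<pi> a \<union> {i} \<subseteq> {1,2,3} \<longleftrightarrow> i \<in> {1,2,3}"
  unfolding coalition_def ex_N_def by auto

lemma coal_mem: "i \<in> coalition ex_N \<pi> a \<longleftrightarrow> i \<in> {1,2,3} \<and> \<pi> i = Some a"
  unfolding coalition_def ex_N_def by auto

lemma card_coal: "card (coalition ex_N \<pi> a) = (if \<pi> 1 = Some a then 1 else 0) +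
   (if \<pi> 2 = Some a then 1 else 0) + (if \<pi> 3 = Some a then 1 else 0)"
  unfolding coalition_def ex_N_def
  by (cases "\<pi> 1 = Some a"; cases "\<pi> 2 = Some a"; cases "\<pi> 3 = Some a")
     (simp_all add: Collect_disj_eq Collect_conj_eq insert_commute)

lemma ball_coal: "(\<forall>j\<in>coalition ex_N \<pi> a. P j) \<longleftrightarrow>
   ((\<pi> 1 = Some a \<longrightarrow> P 1) \<and> (\<pi> 2 = Some a \<longrightarrow> P 2) \<and> (\<pi> 3 = Some a \<longrightarrow> P 3))"
  unfolding coalition_def ex_N_def by auto

lemma connU: "i \<in> {1,2,3} \<Longrightarrow> connected_in ex_L (coalition ex_N \<pi> a \<union> {i}) =
   ((i = 1 \<or> \<pi> 1 = Some a) \<and> (i = 3 \<or> \<pi> 3 = Some a) \<longrightarrow> (i = 2 \<or> \<pi> 2 = Some a))"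
  by (subst conn_char) (auto simp: coal_sub coal_mem)

lemma connC: "connected_in ex_L (coalition ex_N \<pi> a) =
   (\<pi> 1 = Some a \<and> \<pi> 3 = Some a \<longrightarrow> \<pi> 2 = Some a)"
  by (subst conn_char) (auto simp: coal_sub coal_mem)

lemma act_all: "a \<in> ex_A"
  unfolding ex_A_def by (cases a) auto

lemma opt4: "x = None \<or> x = Some Act_a \<or> x = Some Act_b \<or> x = Some Act_c"
  by (metis act.exhaust option.exhaust)

theorem mainTheorem4:
  shows "\<not> (\<exists>\<pi> :: nat \<Rightarrow> act option.
            feasible ex_N ex_A ex_L \<pi> \<and> individually_stable ex_N ex_A ex_L ex_pref \<pi>)"
proof
  assume "\<exists>\<pi> :: nat \<Rightarrow> act option.
            feasible ex_N ex_A ex_L \<pi> \<and> individually_stable ex_N ex_A ex_L ex_pref \<pi>"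
  then obtain \<pi> :: "nat \<Rightarrow> act option" where f: "feasible ex_N ex_A ex_L \<pi>"
    and s: "individually_stable ex_N ex_A ex_L ex_pref \<pi>" by blast
  have F: "\<forall>a\<in>ex_A. connected_in ex_L (coalition ex_N \<pi> a)" using f unfolding feasible_def by blast
  have IR: "\<forall>i\<in>ex_N. ex_pref i (\<pi> i, own_size ex_N \<pi> i) (None, 1)"
    using s unfolding individually_stable_def individually_rational_def by blast
  have ND: "\<forall>i\<in>ex_N. \<forall>a\<in>ex_A. \<not> IS_deviation ex_N ex_A ex_L ex_pref \<pi> i a"
    using s unfolding individually_stable_def by blast
  have F': "(\<pi> 1 = Some a \<and> \<pi> 3 = Some a \<longrightarrow> \<pi> 2 = Some a)" for a
    using F connC[of \<pi> a] unfolding ex_A_def by (cases a) auto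
  have IR': "ex_rank i (\<pi> i, case \<pi> i of None \<Rightarrow> 1 | Some a \<Rightarrow> card (coalition ex_N \<pi> a)) \<ge> 1"
    if "i \<in> {1,2,3}" for i
  proof -
    have "ex_pref i (\<pi> i, own_size ex_N \<pi> i) (None, 1)" using IR that unfolding ex_N_def by blast
    moreover have "ex_rank i (None, 1) = 1" by (simp add: ex_rank_def)
    ultimately show ?thesis unfolding ex_pref_def own_size_def by simp
  qed
  have ND': "\<not> (\<pi> i \<noteq> Some a \<and>
     ((i = 1 \<or> \<pi> 1 = Some a) \<and> (i = 3 \<or> \<pi> 3 = Some a) \<longrightarrow> (i = 2 \<or> \<pi> 2 = Some a)) \<and>
     ex_rank i (Some a, card (coalition ex_N \<pi> a) + 1) >
       ex_rank i (\<pi> i, case \<pi> i of None \<Rightarrow> 1 | Some a \<Rightarrow> card (coalition ex_N \<pi> a)) \<and>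
     (\<forall>j\<in>coalition ex_N \<pi> a. ex_rank j (Some a, card (coalition ex_N \<pi> a) + 1)
          \<ge> ex_rank j (Some a, card (coalition ex_N \<pi> a))))"
    if "i \<in> {1,2,3}" for i a
  proof -
    have "\<not> IS_deviation ex_N ex_A ex_L ex_pref \<pi> i a"
      using ND that unfolding ex_N_def ex_A_def by (cases a) auto
    then show ?thesis using that
      unfolding IS_deviation_def NS_deviation_def strict_pref_def ex_pref_def own_size_def ex_A_def
      using act.exhaust[of a] by (subst (asm) connU) (auto simp: not_le)
  qed
  note ND1 = ND'[of 1, simplified ball_coal card_coal] and ND2 = ND'[of 2, simplified ball_coal card_coal]
    and ND3 = ND'[of 3, simplified ball_coal card_coal]
  note IR1 = IR'[of 1, simplified card_coal] and IR2 = IR'[of 2, simplified card_coal]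
    and IR3 = IR'[of 3, simplified card_coal]
  show False
    using opt4[of "\<pi> 1"] opt4[of "\<pi> 2"] opt4[of "\<pi> 3"]
    apply (elim disjE)
    apply (insert ND1[of Act_a] ND1[of Act_b] ND1[of Act_c] ND2[of Act_a] ND2[of Act_b] ND2[of Act_c]
      ND3[of Act_a] ND3[of Act_b] ND3[of Act_c] IR1 IR2 IR3 F'[of Act_a] F'[of Act_b] F'[of Act_c])
    apply (simp_all add: ex_rank_def)
    done
qed

end
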